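(* Let $k\ge 2$ be an integer, $1/2<q<1$. Let $y^*$ be a point with all coordinates strictly positive at which $P$ attains its maximum over $\Delta_k$, and suppose $y^*\neq(1/k,\dots,1/k)$. Then the coordinates of $y^*$ take exactly two distinct values $a$ and $b$, with $a<1-q<b$.
   Context: $\Delta_k=\{y\in\mathbb R^k: y_i\ge 0,\ \sum_i y_i=1\}$. For $y\in\Delta_k$, $P(y)=\sum_{i=1}^k y_i^q\prod_{j\ne i}(1-y_j)^q$. *)

theory Defs
  imports "HOL-Analysis.Analysis"
begin

text \<open>Points of R^k are represented as functions nat => real; only the
coordinates 0..k-1 are relevant.\<close>

definition prob_simplex :: "nat \<Rightarrow> (nat \<Rightarrow> real) set" where
  "prob_simplex k = {y. (\<forall>i<k. 0 \<le> y i) \<and> (\<Sum>i<k. y i) = 1}"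

definition Pfun :: "nat \<Rightarrow> real \<Rightarrow> (nat \<Rightarrow> real) \<Rightarrow> real" where
  "Pfun k q y = (\<Sum>i<k. y i powr q * (\<Prod>j\<in>{..<k} - {i}. (1 - y j) powr q))"

end

theory Submission imports Defs begin
lemma rho_deriv:
  fixes q v :: real assumes "0 < v" "v < 1"
  shows "((\<lambda>v. (v/(1-v)) powr q) has_real_derivative q * (v powr (q-1) / (1-v) powr (q+1))) (at v)"
proof -
  have "((\<lambda>v. (v/(1-v)) powr q) has_real_derivative q * (v/(1-v)) powr (q-1) * (((1-v) + v)/(1-v)^2)) (at v)"
    using assms
    by (auto intro!: derivative_eq_intros simp: field_simps power2_eq_square)
  moreover have "q * (v/(1-v)) powr (q-1) * (((1-v) + v)/(1-v)^2) = q * (v powr (q-1) / (1-v) powr (q+1))"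
  proof -
    have e1: "(v/(1-v)) powr (q-1) = v powr (q-1) / (1-v) powr (q-1)"
      using assms by (simp add: powr_divide)
    have e2: "(1-v) powr (q+1) = (1-v) powr (q-1) * (1-v)^2"
    proof -
      have "(1-v) powr (q+1) = (1-v) powr ((q-1) + 2)" by (simp add: add.commute)
      also have "\<dots> = (1-v) powr (q-1) * (1-v) powr 2" by (rule powr_add)
      also have "(1-v) powr 2 = (1-v)^2" using assms by (simp add: powr_numeral)
      finally show ?thesis .
    qed
    show ?thesis unfolding e1 e2 using assms by (simp add: field_simps)
  qed
  ultimately show ?thesis by simp
qed

definition rho :: "real \<Rightarrow> real \<Rightarrow> real" where "rho q v = (v/(1-v)) powr q"
definition omega :: "real \<Rightarrow> real \<Rightarrow> real" where "omega q v = v powr (q-1) / (1-v) powr (q+1)"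

lemma rho_chain:
  assumes "(f has_real_derivative f') (at t)" "0 < f t" "f t < 1"
  shows "((\<lambda>t. rho q (f t)) has_real_derivative q * omega q (f t) * f') (at t)"
  unfolding rho_def omega_def
  using DERIV_chain2[OF rho_deriv[OF assms(2,3)] assms(1)] by simp

lemma key_pair:
  fixes x z B R q d :: real
  assumes x: "0 < x" "x < 1" and z: "0 < z" "z < 1" and q: "0 < q" and B: "B > 0" and d: "d > 0"
  and lm: "\<forall>t. \<bar>0 - t\<bar> < d \<longrightarrow> h t \<le> h 0"
  and h: "h = (\<lambda>t. (1-x-t) powr q * (1-z+t) powr q * B * (rho q (x+t) + rho q (z-t) + R))"
  shows "omega q x - (rho q x + rho q z + R)/(1-x) = omega q z - (rho q x + rho q z + R)/(1-z)"
proof -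
  define S where "S = rho q x + rho q z + R"
  define D where "D = B*( (-q*(1-x) powr (q-1) * (1-z) powr q + (1-x) powr q * (q * (1-z) powr (q-1))) * S
       + (1-x) powr q*(1-z) powr q * (q * omega q x * 1 + q * omega q z * (-1)))"
  have "(h has_real_derivative D) (at 0)"
    unfolding h D_def S_def using x z
    apply (auto intro!: derivative_eq_intros rho_chain)
    apply (simp add: algebra_simps)
    done
  hence "D = 0" using DERIV_local_max[OF _ d lm] by blast
  moreover have "D = B*(1-x) powr q*(1-z) powr q * q*((-1/(1-x) + 1/(1-z))*S + omega q x - omega q z)"
    unfolding D_def using x z by (simp add: powr_diff field_simps)
  ultimately have "(-1/(1-x) + 1/(1-z))*S + omega q x - omega q z = 0"
    using x z q B by simp
  thus ?thesis unfolding S_def[symmetric] by (simp add: field_simps)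
qed

definition psi :: "real \<Rightarrow> real \<Rightarrow> real" where "psi q v = (q-1) * ln v - q * ln (1-v)"

lemma psi_deriv:
  assumes "0 < v" "v < 1"
  shows "(psi q has_real_derivative (q - 1 + v)/(v * (1-v))) (at v)"
proof -
  have "(psi q has_real_derivative (q-1) * (1/v) - q * (-1/(1-v))) (at v)"
    unfolding psi_def using assms
    by (auto intro!: derivative_eq_intros)
  moreover have "(q-1) * (1/v) - q * (-1/(1-v)) = (q - 1 + v)/(v * (1-v))"
    using assms by (simp add: field_simps)
  ultimately show ?thesis by simp
qed

lemma psi_cont: "0 < a \<Longrightarrow> b < 1 \<Longrightarrow> continuous_on {a..b} (psi q)"
  unfolding psi_def by (intro continuous_intros) auto

lemma psi_dec:
  assumes "0 < u" "u < v" "v \<le> 1 - q" "q < 1" "0 < q"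
  shows "psi q v < psi q u"
proof (rule DERIV_neg_imp_decreasing_open[OF assms(2)])
  fix x assume "u < x" "x < v"
  show "\<exists>y. (psi q has_real_derivative y) (at x) \<and> y < 0"
  proof (intro exI conjI)
    show "(psi q has_real_derivative (q - 1 + x)/(x * (1-x))) (at x)"
      using assms \<open>u < x\<close> \<open>x < v\<close> by (intro psi_deriv) auto
    show "(q - 1 + x)/(x * (1-x)) < 0"
      using assms \<open>u < x\<close> \<open>x < v\<close> by (intro divide_neg_pos mult_pos_pos) auto
  qed
qed (use assms in \<open>auto intro!: psi_cont\<close>)

lemma psi_inc:
  assumes "1 - q \<le> u" "u < v" "v < 1" "0 < q" "q < 1"
  shows "psi q u < psi q v"
proof (rule DERIV_pos_imp_increasing_open[OF assms(2)])
  fix x assume "u < x" "x < v"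
  show "\<exists>y. (psi q has_real_derivative y) (at x) \<and> y > 0"
  proof (intro exI conjI)
    show "(psi q has_real_derivative (q - 1 + x)/(x * (1-x))) (at x)"
      using assms \<open>u < x\<close> \<open>x < v\<close> by (intro psi_deriv) auto
    show "(q - 1 + x)/(x * (1-x)) > 0"
      using assms \<open>u < x\<close> \<open>x < v\<close> by (intro divide_pos_pos mult_pos_pos) auto
  qed
qed (use assms in \<open>auto intro!: psi_cont\<close>)

lemma omega_psi:
  assumes "0 < v" "v < 1"
  shows "omega q v * (1 - v) = exp (psi q v)"
proof -
  have "(1-v) powr (q+1) = (1-v) powr q * (1-v) powr 1" by (rule powr_add)
  hence e1: "(1-v) powr (q+1) = (1-v) powr q * (1-v)" using assms by simp
  have p: "(1-v) powr q > 0" using assms by simp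
  have "omega q v * (1 - v) = v powr (q-1) / (1-v) powr q"
    unfolding omega_def e1 using assms p by (simp add: divide_simps)
  also have "\<dots> = exp (ln v * (q-1)) / exp (ln (1-v) * q)"
    using assms by (simp add: powr_def mult.commute)
  also have "\<dots> = exp (ln v * (q-1) - ln (1-v) * q)"
    by (rule exp_diff[symmetric])
  also have "\<dots> = exp (psi q v)"
    unfolding psi_def by (simp add: mult.commute)
  finally show ?thesis .
qed

lemma rho_omega:
  assumes "0 < v" "v < 1"
  shows "rho q v = v * (omega q v * (1 - v))"
proof -
  have "(1-v) powr (q+1) = (1-v) powr q * (1-v) powr 1" by (rule powr_add)
  hence e1: "(1-v) powr (q+1) = (1-v) powr q * (1-v)" using assms by simp
  have p: "(1-v) powr q > 0" using assms by simp
  have e: "omega q v * (1 - v) = v powr (q-1) / (1-v) powr q"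
    unfolding omega_def e1 using assms p by (simp add: divide_simps)
  have "v powr (q - 1 + 1) = v powr (q-1) * v powr 1" by (rule powr_add)
  hence "v powr q = v powr (q-1) * v" using assms by simp
  thus ?thesis unfolding e rho_def using assms
    by (simp add: powr_divide)
qed
lemma sum_split2:
  fixes f :: "nat \<Rightarrow> real"
  assumes "finite A" "i \<in> A" "j \<in> A" "i \<noteq> j"
  shows "sum f A = f i + f j + sum f (A - {i,j})"
proof -
  have "sum f A = f i + sum f (A - {i})" using assms by (simp add: sum.remove)
  also have "sum f (A - {i}) = f j + sum f (A - {i} - {j})" using assms by (simp add: sum.remove)
  also have "A - {i} - {j} = A - {i,j}" by auto
  finally show ?thesis by simp
qed

lemma prod_split2:
  fixes f :: "nat \<Rightarrow> real"
  assumes "finite A" "i \<in> A" "j \<in> A" "i \<noteq> j"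
  shows "prod f A = f i * f j * prod f (A - {i,j})"
proof -
  have "prod f A = f i * prod f (A - {i})" using assms by (simp add: prod.remove)
  also have "prod f (A - {i}) = f j * prod f (A - {i} - {j})" using assms by (simp add: prod.remove)
  also have "A - {i} - {j} = A - {i,j}" by auto
  finally show ?thesis by simp
qed

lemma pfun_factor:
  assumes "\<forall>m<k. 0 \<le> y m \<and> y m < 1"
  shows "Pfun k q y = (\<Sum>l<k. rho q (y l)) * (\<Prod>m<k. (1 - y m) powr q)"
proof -
  have "y l powr q * (\<Prod>m\<in>{..<k}-{l}. (1 - y m) powr q) = rho q (y l) * (\<Prod>m<k. (1 - y m) powr q)"
    if l: "l < k" for l
  proof -
    have "(\<Prod>m<k. (1 - y m) powr q) = (1 - y l) powr q * (\<Prod>m\<in>{..<k}-{l}. (1 - y m) powr q)"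
      using l by (simp add: prod.remove)
    moreover have "(1 - y l) powr q > 0" using assms l by (simp add: less_le)
    moreover have "rho q (y l) = y l powr q / (1 - y l) powr q"
      unfolding rho_def using assms l by (simp add: powr_divide)
    ultimately show ?thesis by simp
  qed
  hence "Pfun k q y = (\<Sum>l<k. rho q (y l) * (\<Prod>m<k. (1 - y m) powr q))"
    unfolding Pfun_def by (intro sum.cong) auto
  thus ?thesis by (simp add: sum_distrib_right)
qed

lemma pfun_split:
  assumes "\<forall>m<k. 0 \<le> y m \<and> y m < 1" "i < k" "j < k" "i \<noteq> j"
  shows "Pfun k q y = (1 - y i) powr q * (1 - y j) powr q * (\<Prod>m\<in>{..<k}-{i,j}. (1 - y m) powr q)
     * (rho q (y i) + rho q (y j) + (\<Sum>l\<in>{..<k}-{i,j}. rho q (y l)))"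
  unfolding pfun_factor[OF assms(1)]
  using sum_split2[of "{..<k}" i j "\<lambda>l. rho q (y l)"] prod_split2[of "{..<k}" i j "\<lambda>m. (1 - y m) powr q"] assms
  by simp

lemma psi_eq_side:
  assumes "0 < u" "u < 1" "0 < v" "v < 1" "psi q u = psi q v" "0 < q" "q < 1"
    and "(u \<le> 1 - q \<and> v \<le> 1 - q) \<or> (1 - q \<le> u \<and> 1 - q \<le> v)"
  shows "u = v"
proof (rule ccontr)
  assume "u \<noteq> v"
  then consider "u < v" | "v < u" by linarith
  thus False
  proof cases
    case 1 thus False using assms psi_dec[of u v q] psi_inc[of q u v] by auto
  next
    case 2 thus False using assms psi_dec[of v u q] psi_inc[of q v u] by auto
  qed
qed
theorem corollary4p3:
  fixes k :: nat and q :: real and ystar :: "nat \<Rightarrow> real"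
  assumes "k \<ge> 2" and "1/2 < q" and "q < 1"
    and "ystar \<in> prob_simplex k"
    and "\<forall>i<k. ystar i > 0"
    and "\<forall>y\<in>prob_simplex k. Pfun k q y \<le> Pfun k q ystar"
    and "\<exists>i<k. ystar i \<noteq> 1 / real k"
  shows "\<exists>a b. a < 1 - q \<and> 1 - q < b \<and> ystar ` {..<k} = {a, b}"
proof -
  define y where "y = ystar"
  define K where "K = {..<k}"
  have q0: "0 < q" using assms(2) by simp
  have pos: "\<And>i. i < k \<Longrightarrow> 0 < y i" using assms(5) y_def by simp
  have sum1: "(\<Sum>i<k. y i) = 1" using assms(4) unfolding y_def prob_simplex_def by simp
  have pair: "y i + y j \<le> 1" if "i < k" "j < k" "i \<noteq> j" for i j
  proof -
    have "(\<Sum>i<k. y i) = y i + y j + (\<Sum>l\<in>{..<k}-{i,j}. y l)"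
      using sum_split2[of "{..<k}" i j y] that by simp
    moreover have "(\<Sum>l\<in>{..<k}-{i,j}. y l) \<ge> 0" using pos by (intro sum_nonneg) (auto simp: less_imp_le)
    ultimately show ?thesis using sum1 by simp
  qed
  have lt1: "\<And>i. i < k \<Longrightarrow> y i < 1"
  proof -
    fix i assume i: "i < k"
    obtain j where j: "j < k" "j \<noteq> i"
      using assms(1) i by (metis One_nat_def Suc_1 less_Suc_eq not_less_eq_eq not_gr0 order_less_le_trans zero_less_one)
    show "y i < 1" using pair[OF i j(1) j(2)[symmetric]] pos[OF j(1)] by simp
  qed
  define S where "S = (\<Sum>l<k. rho q (y l))"
  have foc: "omega q (y i) - S/(1-y i) = omega q (y j) - S/(1-y j)" if ij: "i < k" "j < k" for i j
  proof (cases "i = j")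
    case True thus ?thesis by simp
  next
    case False
    define B where "B = (\<Prod>m\<in>{..<k}-{i,j}. (1 - y m) powr q)"
    define R where "R = (\<Sum>l\<in>{..<k}-{i,j}. rho q (y l))"
    define h where "h = (\<lambda>t. (1 - y i - t) powr q * (1 - y j + t) powr q * B * (rho q (y i + t) + rho q (y j - t) + R))"
    define d where "d = min (y i) (y j)"
    have d: "d > 0" unfolding d_def using pos ij by simp
    have B: "B > 0" unfolding B_def using lt1 by (intro prod_pos) (fastforce dest: lt1)
    have hP: "h t = Pfun k q (y(i := y i + t, j := y j - t))" if t: "\<bar>t\<bar> < d" for t
    proof -
      let ?y = "y(i := y i + t, j := y j - t)"
      have "\<forall>m<k. 0 \<le> ?y m \<and> ?y m < 1"
        using pos lt1 t pair[OF ij False] False unfolding d_def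
        by (auto simp: abs_less_iff) (smt (verit))+
      note sp = pfun_split[OF this ij False, of q]
      have e0: "(\<Prod>m\<in>{..<k}-{i,j}. (1 - ?y m) powr q) = B" unfolding B_def by (intro prod.cong) auto
      have e3: "(\<Sum>l\<in>{..<k}-{i,j}. rho q (?y l)) = R" unfolding R_def by (intro sum.cong) auto
      have e1: "?y i = y i + t" "?y j = y j - t" using False by auto
      show ?thesis unfolding sp e0 e3 e1 h_def by (simp add: algebra_simps)
    qed
    have lm: "\<forall>t. \<bar>0 - t\<bar> < d \<longrightarrow> h t \<le> h 0"
    proof (intro allI impI)
      fix t assume "\<bar>0 - t\<bar> < d"
      hence t: "\<bar>t\<bar> < d" by simp
      let ?y = "y(i := y i + t, j := y j - t)"
      have "?y \<in> prob_simplex k"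
      proof -
        have "\<forall>m<k. 0 \<le> ?y m" using pos t unfolding d_def by (auto simp: abs_less_iff less_imp_le)
        moreover have "(\<Sum>m<k. ?y m) = 1"
        proof -
          have "(\<Sum>m<k. ?y m) = ?y i + ?y j + (\<Sum>l\<in>{..<k}-{i,j}. ?y l)"
            using sum_split2[of "{..<k}" i j ?y] ij False by simp
          also have "(\<Sum>l\<in>{..<k}-{i,j}. ?y l) = (\<Sum>l\<in>{..<k}-{i,j}. y l)" by (intro sum.cong) auto
          also have "?y i + ?y j + \<dots> = y i + y j + (\<Sum>l\<in>{..<k}-{i,j}. y l)" using False by simp
          also have "\<dots> = 1" using sum_split2[of "{..<k}" i j y] ij False sum1 by simp
          finally show ?thesis .
        qed
        ultimately show ?thesis unfolding prob_simplex_def by simp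
      qed
      hence "Pfun k q ?y \<le> Pfun k q y" using assms(6) y_def by simp
      moreover have "h 0 = Pfun k q (y(i := y i + 0, j := y j - 0))" using hP d by simp
      ultimately show "h t \<le> h 0" using hP[OF t] by simp
    qed
    have kp: "omega q (y i) - (rho q (y i) + rho q (y j) + R)/(1 - y i) = omega q (y j) - (rho q (y i) + rho q (y j) + R)/(1 - y j)"
      by (rule key_pair[OF pos[OF ij(1)] lt1[OF ij(1)] pos[OF ij(2)] lt1[OF ij(2)] q0 B d lm h_def])
    have "S = rho q (y i) + rho q (y j) + R"
      unfolding S_def R_def using sum_split2[of "{..<k}" i j "\<lambda>l. rho q (y l)"] ij False by simp
    thus ?thesis using kp by simp
  qed
  have k0: "0 < k" using assms(1) by simp
  define c where "c = omega q (y 0) - S/(1-y 0)"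
  have phi: "omega q (y i) * (1 - y i) = S + c * (1 - y i)" if i: "i < k" for i
  proof -
    have "omega q (y i) = c + S/(1-y i)" using foc[OF i k0] unfolding c_def by simp
    thus ?thesis using lt1[OF i] by (simp add: field_simps)
  qed
  have "S = (\<Sum>l<k. y l * (S + c * (1 - y l)))"
  proof -
    have "(\<Sum>l<k. rho q (y l)) = (\<Sum>l<k. y l * (S + c * (1 - y l)))"
      by (intro sum.cong) (simp_all add: rho_omega pos lt1 phi)
    from this[folded S_def] show ?thesis .
  qed
  also have "\<dots> = S * (\<Sum>l<k. y l) + c * (\<Sum>l<k. y l * (1 - y l))"
    by (simp add: sum.distrib sum_distrib_left distrib_left mult.commute mult.left_commute)
  finally have "c * (\<Sum>l<k. y l * (1 - y l)) = 0" using sum1 by simp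
  moreover have "(\<Sum>l<k. y l * (1 - y l)) > 0"
    using pos lt1 k0 by (intro sum_pos) auto
  ultimately have c0: "c = 0" by simp
  have psiS: "psi q (y i) = ln S" if i: "i < k" for i
  proof -
    have "exp (psi q (y i)) = S" using phi[OF i] c0 omega_psi[OF pos[OF i] lt1[OF i], of q] by simp
    hence "ln (exp (psi q (y i))) = ln S" by simp
    thus ?thesis by simp
  qed
  have same: "y i = y j" if "i < k" "j < k"
     "(y i \<le> 1 - q \<and> y j \<le> 1 - q) \<or> (1 - q \<le> y i \<and> 1 - q \<le> y j)" for i j
    using psi_eq_side[of "y i" "y j" q] that pos lt1 psiS q0 assms(3) by auto
  obtain i0 where i0: "i0 < k" "y i0 \<noteq> 1 / real k" using assms(7) y_def by auto
  obtain j0 where j0: "j0 < k" "y j0 \<noteq> y i0"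
  proof (rule ccontr)
    assume "\<not> thesis"
    hence all: "\<forall>j<k. y j = y i0" using that by blast
    hence "(\<Sum>l<k. y l) = real k * y i0" by simp
    thus False using sum1 i0 k0 by (simp add: field_simps)
  qed
  define a where "a = min (y i0) (y j0)"
  define b where "b = max (y i0) (y j0)"
  have ab: "a < b" unfolding a_def b_def using j0 by auto
  have a_in: "\<exists>i<k. y i = a" unfolding a_def using i0 j0 by (auto simp: min_def)
  have b_in: "\<exists>i<k. y i = b" unfolding b_def using i0 j0 by (auto simp: max_def)
  have alt: "a < 1 - q"
  proof (rule ccontr)
    assume "\<not> a < 1 - q"
    hence "1 - q \<le> y i0 \<and> 1 - q \<le> y j0" unfolding a_def by auto
    thus False using same[OF i0(1) j0(1)] j0 by auto
  qed
  have bgt: "1 - q < b"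
  proof (rule ccontr)
    assume "\<not> 1 - q < b"
    hence "y i0 \<le> 1 - q \<and> y j0 \<le> 1 - q" unfolding b_def by auto
    thus False using same[OF i0(1) j0(1)] j0 by auto
  qed
  have "y ` {..<k} = {a, b}"
  proof
    show "y ` {..<k} \<subseteq> {a, b}"
    proof
      fix v assume "v \<in> y ` {..<k}"
      then obtain m where m: "m < k" "v = y m" by auto
      obtain ia where ia: "ia < k" "y ia = a" using a_in by auto
      obtain ib where ib: "ib < k" "y ib = b" using b_in by auto
      show "v \<in> {a, b}"
      proof (cases "y m \<le> 1 - q")
        case True thus ?thesis using same[OF m(1) ia(1)] ia alt m by auto
      next
        case False thus ?thesis using same[OF m(1) ib(1)] ib bgt m by auto
      qed
    qed
    show "{a, b} \<subseteq> y ` {..<k}" using a_in b_in by auto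
  qed
  thus ?thesis using alt bgt y_def by blast
qed
end
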